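(* Let $n>3$ be real, let $m=1/2$, and let $K=K(1/2)=\int_0^{\pi/2}\bigl(1-\tfrac12\sin^2\theta\bigr)^{-1/2}\,d\theta$. Define $g:\mathbb R\to\mathbb R$ by $g(x)=\operatorname{cn}(x,1/2)^n$ for $x\in[-K,K]$ and $g(x)=0$ otherwise. Then $g$ is of class $C^3$ on $\mathbb R$ and satisfies $$n\,g'''(x)\,g(x)^2-3n\,g''(x)\,g'(x)\,g(x)+2\left(n-\tfrac1n\right)g'(x)^3=0\qquad\text{for all }x\in\mathbb R.$$ Consequently, for any constants $\alpha\neq 0,\beta,\gamma,\delta\in\mathbb R$, the function $Y(x)=\gamma\int_{-\infty}^{x}g(\alpha t+\beta)\,dt+\delta$ is a $C^4$ solution on $\mathbb R$ of $Y''''(Y')^2-3Y'''Y''Y'+2(1-n^{-2})(Y'')^3=0$.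
   Context: $\operatorname{sn}(x,m),\operatorname{cn}(x,m),\operatorname{dn}(x,m)$ denote the Jacobian elliptic functions with parameter $m\in[0,1)$; they satisfy $\operatorname{sn}'=\operatorname{cn}\operatorname{dn}$, $\operatorname{cn}'=-\operatorname{sn}\operatorname{dn}$, $\operatorname{dn}'=-m\operatorname{sn}\operatorname{cn}$, $\operatorname{sn}^2+\operatorname{cn}^2=1$, $\operatorname{dn}^2+m\operatorname{sn}^2=1$, with $\operatorname{cn}(0,m)=1$, $\operatorname{sn}(0,m)=0$. $K(m)$ is the complete elliptic integral of the first kind; $\operatorname{cn}(x,m)>0$ for $|x|<K(m)$ and $\operatorname{cn}(\pm K(m),m)=0$. *)

theory Defs
  imports "HOL-Analysis.Analysis"
begin

definition ellF :: "real \<Rightarrow> real \<Rightarrow> real" where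
  "ellF m \<phi> = (if 0 \<le> \<phi> then integral {0..\<phi>} (\<lambda>\<theta>. 1 / sqrt (1 - m * (sin \<theta>)\<^sup>2))
               else - integral {\<phi>..0} (\<lambda>\<theta>. 1 / sqrt (1 - m * (sin \<theta>)\<^sup>2)))"

definition ellK :: "real \<Rightarrow> real" where
  "ellK m = ellF m (pi / 2)"

text \<open>Jacobi amplitude: the inverse of phi |-> F(phi,m) (a bijection of the reals for 0 <= m < 1).\<close>
definition jacobi_am :: "real \<Rightarrow> real \<Rightarrow> real" where
  "jacobi_am m x = (THE \<phi>. ellF m \<phi> = x)"

definition jacobi_sn :: "real \<Rightarrow> real \<Rightarrow> real" where
  "jacobi_sn m x = sin (jacobi_am m x)"

definition jacobi_cn :: "real \<Rightarrow> real \<Rightarrow> real" where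
  "jacobi_cn m x = cos (jacobi_am m x)"

definition jacobi_dn :: "real \<Rightarrow> real \<Rightarrow> real" where
  "jacobi_dn m x = sqrt (1 - m * (sin (jacobi_am m x))\<^sup>2)"

end

theory Submission imports Defs begin

definition ff :: "real \<Rightarrow> real" where "ff \<theta> = 1 / sqrt (1 - 1/2 * (sin \<theta>)\<^sup>2)"

lemma rad_pos: "1 - 1/2 * (sin (t::real))\<^sup>2 \<ge> 1/2"
proof -
  have "(sin t)\<^sup>2 \<le> 1" by (simp add: abs_square_le_1)
  then show ?thesis by simp
qed

lemma ff_pos: "ff t > 0"
  using rad_pos[of t] by (simp add: ff_def)

lemma ff_ge1: "ff t \<ge> 1"
proof -
  have "sqrt (1 - 1/2 * (sin t)\<^sup>2) \<le> 1" using rad_pos[of t] by (simp add: real_sqrt_le_1_iff)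
  moreover have "sqrt (1 - 1/2 * (sin t)\<^sup>2) > 0" using rad_pos[of t] by simp
  ultimately show ?thesis by (simp add: divide_simps ff_def)
qed

lemma sin_sq_ne2: "(sin (t::real))\<^sup>2 \<noteq> 2"
  using rad_pos[of t] by auto

lemma ff_cont: "continuous_on S ff"
  unfolding ff_def by (intro continuous_intros) (auto simp: sin_sq_ne2)

lemma ff_even: "ff (-y) = ff y"
  by (simp add: ff_def)
lemma ff_eta: "(\<lambda>\<theta>. 1 / sqrt (1 - 1/2 * (sin \<theta>)\<^sup>2)) = ff"
  by (simp add: ff_def fun_eq_iff)
lemma ellF_pos: "0 \<le> x \<Longrightarrow> ellF (1/2) x = integral {0..x} ff"
  unfolding ellF_def ff_eta by simp
lemma ellF_neg: "\<not> 0 \<le> x \<Longrightarrow> ellF (1/2) x = - integral {x..0} ff"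
  unfolding ellF_def ff_eta by simp
lemma ellF_eq:
  assumes "-R \<le> x" "-R \<le> 0"
  shows "ellF (1/2) x = integral {-R..x} ff - integral {-R..0} ff"
proof (cases "0 \<le> x")
  case True
  have i: "ff integrable_on {-R..x}" by (rule integrable_continuous_interval[OF ff_cont])
  have "integral {-R..0} ff + integral {0..x} ff = integral {-R..x} ff"
    by (rule Henstock_Kurzweil_Integration.integral_combine[OF assms(2) True i])
  then show ?thesis using True ellF_pos[of x] by linarith
next
  case False
  have i: "ff integrable_on {-R..0}" by (rule integrable_continuous_interval[OF ff_cont])
  have "integral {-R..x} ff + integral {x..0} ff = integral {-R..0} ff"
    by (rule Henstock_Kurzweil_Integration.integral_combine[OF assms(1) _ i]) (use False in simp)
  then show ?thesis using False ellF_neg[of x] by linarith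
qed

lemma ellF_deriv: "(ellF (1/2) has_real_derivative ff x) (at x)"
proof -
  define R where "R = \<bar>x\<bar> + 1"
  have "((\<lambda>y. integral {-R..y} ff) has_real_derivative ff x) (at x within {-R..R})"
    using R_def by (intro integral_has_real_derivative ff_cont) auto
  moreover have "x \<in> interior {-R..R}" using R_def by auto
  ultimately have "((\<lambda>y. integral {-R..y} ff) has_real_derivative ff x) (at x)"
    by (metis at_within_interior)
  then have "((\<lambda>y. integral {-R..y} ff - integral {-R..0} ff) has_real_derivative ff x) (at x)"
    using DERIV_diff[OF _ DERIV_const] by simp
  then show ?thesis
  proof (rule has_field_derivative_transform_within_open[where S="{-R<..<R}"])
    show "open {-R<..<R}" by simp
    show "x \<in> {-R<..<R}" using R_def by auto
    fix y assume "y \<in> {-R<..<R}"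
    then show "integral {-R..y} ff - integral {-R..0} ff = ellF (1/2) y"
      using R_def by (intro ellF_eq[symmetric]) auto
  qed
qed

lemma ellF_cont: "isCont (ellF (1/2)) x"
  using ellF_deriv DERIV_isCont by blast

lemma ellF_0: "ellF (1/2) 0 = 0"
  by (simp add: ellF_def)

lemma ellF_strict_mono: "strict_mono (ellF (1/2))"
  unfolding strict_mono_def
proof (intro allI impI)
  fix a b :: real assume "a < b"
  then show "ellF (1/2) a < ellF (1/2) b"
    by (rule DERIV_pos_imp_increasing) (use ellF_deriv ff_pos in blast)
qed

lemma ellF_ge: "0 \<le> x \<Longrightarrow> ellF (1/2) x \<ge> x"
proof -
  assume "0 \<le> x"
  have "(\<lambda>y. ellF (1/2) y - y) 0 \<le> (\<lambda>y. ellF (1/2) y - y) x"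
  proof (rule DERIV_nonneg_imp_nondecreasing[of 0 x "\<lambda>y. ellF (1/2) y - y", OF \<open>0 \<le> x\<close>])
    fix y
    have "((\<lambda>y. ellF (1/2) y - y) has_real_derivative ff y - 1) (at y)"
      by (intro DERIV_diff ellF_deriv DERIV_ident)
    then show "\<exists>d. ((\<lambda>y. ellF (1/2) y - y) has_real_derivative d) (at y) \<and> d \<ge> 0"
      using ff_ge1[of y] by auto
  qed
  then show ?thesis by (simp add: ellF_0)
qed

lemma ellF_odd: "ellF (1/2) (-x) = - ellF (1/2) x"
proof -
  have "(\<lambda>y. ellF (1/2) (-y) + ellF (1/2) y) x = (\<lambda>y. ellF (1/2) (-y) + ellF (1/2) y) 0"
  proof (rule DERIV_isconst_all[of "\<lambda>y. ellF (1/2) (-y) + ellF (1/2) y"], intro allI)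
    fix y
    have "((\<lambda>y. ellF (1/2) (-y) + ellF (1/2) y) has_real_derivative ff (-y) * (-1) + ff y) (at y)"
      by (intro DERIV_add DERIV_chain2[OF ellF_deriv] ellF_deriv derivative_eq_intros) auto
    then show "((\<lambda>y. ellF (1/2) (-y) + ellF (1/2) y) has_real_derivative 0) (at y)"
      by (simp add: ff_even)
  qed
  then show ?thesis by (simp add: ellF_0)
qed

lemma ellF_le: "x \<le> 0 \<Longrightarrow> ellF (1/2) x \<le> x"
  using ellF_ge[of "-x"] ellF_odd[of x] by simp

lemma ellF_surj: "\<exists>\<phi>. ellF (1/2) \<phi> = y"
proof (cases "0 \<le> y")
  case True
  have "\<exists>x\<ge>0. x \<le> y \<and> ellF (1/2) x = y"
    by (rule IVT) (use True ellF_ge[of y] ellF_cont in \<open>simp_all add: ellF_0\<close>)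
  then show ?thesis by blast
next
  case False
  have "\<exists>x\<ge>y. x \<le> 0 \<and> ellF (1/2) x = y"
    by (rule IVT) (use False ellF_le[of y] ellF_cont in \<open>simp_all add: ellF_0\<close>)
  then show ?thesis by blast
qed

lemma ellF_inj: "ellF (1/2) a = ellF (1/2) b \<Longrightarrow> a = b"
  by (metis ellF_strict_mono strict_mono_eq)

lemma am_F: "jacobi_am (1/2) (ellF (1/2) \<phi>) = \<phi>"
  unfolding jacobi_am_def by (rule the_equality) (simp_all add: ellF_inj)

lemma F_am: "ellF (1/2) (jacobi_am (1/2) x) = x"
proof -
  obtain p where "ellF (1/2) p = x" using ellF_surj by blast
  then show ?thesis using am_F[of p] by simp
qed


abbreviation "am \<equiv> jacobi_am (1/2)"
abbreviation "KK \<equiv> ellK (1/2)"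

lemma am_cont: "isCont am x"
proof -
  have "isCont am (ellF (1/2) (am x))"
    by (rule isCont_inverse_function[of 1]) (auto simp: am_F ellF_cont)
  then show ?thesis by (simp add: F_am)
qed

definition dd0 :: "real \<Rightarrow> real" where "dd0 \<phi> = sqrt (1 - 1/2 * (sin \<phi>)\<^sup>2)"

lemma dd0_pos: "dd0 t > 0" using rad_pos[of t] by (simp add: dd0_def)

lemma dd0_sq: "(dd0 t)\<^sup>2 = 1 - 1/2 * (sin t)\<^sup>2" using rad_pos[of t] by (simp add: dd0_def)

lemma am_deriv: "(am has_real_derivative dd0 (am x)) (at x)"
proof -
  have "(am has_real_derivative inverse (ff (am x))) (at x)"
    by (rule DERIV_inverse_function[where f="ellF (1/2)" and g=am and a="x-1" and b="x+1"])
       (use ellF_deriv ff_pos[of "am x"] F_am am_cont in auto)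
  then show ?thesis by (simp add: ff_def dd0_def)
qed

definition uu :: "real \<Rightarrow> real" where "uu x = cos (am x)"
definition ww :: "real \<Rightarrow> real" where "ww x = sin (am x) * dd0 (am x)"

lemma uu_deriv: "(uu has_real_derivative - ww x) (at x)"
proof -
  have "((\<lambda>x. cos (am x)) has_real_derivative - sin (am x) * dd0 (am x)) (at x)"
    using DERIV_chain2[OF DERIV_cos am_deriv] by simp
  then show ?thesis unfolding uu_def[abs_def] ww_def by simp
qed

lemma dd0_deriv: "(dd0 has_real_derivative - (sin t * cos t) / (2 * dd0 t)) (at t)"
proof -
  have i: "((\<lambda>t. 1 - 1/2 * (sin t)\<^sup>2) has_real_derivative -(sin t * cos t)) (at t)"
    by (auto intro!: derivative_eq_intros)
  have "((\<lambda>t. sqrt (1 - 1/2 * (sin t)\<^sup>2)) has_real_derivative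
      inverse (sqrt (1 - 1/2 * (sin t)\<^sup>2)) / 2 * (-(sin t * cos t))) (at t)"
    using rad_pos[of t] by (intro DERIV_chain2[OF DERIV_real_sqrt i]) auto
  then show ?thesis unfolding dd0_def[abs_def] by (simp add: field_simps)
qed

lemma ww_deriv: "(ww has_real_derivative (uu x)^3) (at x)"
proof -
  let ?t = "am x"
  have "((\<lambda>t. sin t * dd0 t) has_real_derivative
      cos ?t * dd0 ?t + sin ?t * (- (sin ?t * cos ?t) / (2 * dd0 ?t))) (at ?t)"
    by (rule DERIV_cong[OF DERIV_mult'[OF DERIV_sin dd0_deriv]]) (simp add: algebra_simps)
  from DERIV_chain2[OF this am_deriv]
  have "(ww has_real_derivative
      (cos ?t * dd0 ?t + sin ?t * (- (sin ?t * cos ?t) / (2 * dd0 ?t))) * dd0 ?t) (at x)"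
    unfolding ww_def[abs_def] by simp
  moreover have "(cos ?t * dd0 ?t + sin ?t * (- (sin ?t * cos ?t) / (2 * dd0 ?t))) * dd0 ?t
      = (uu x)^3"
  proof -
    have "(cos ?t * dd0 ?t + sin ?t * (- (sin ?t * cos ?t) / (2 * dd0 ?t))) * dd0 ?t
        = cos ?t * (dd0 ?t)\<^sup>2 - (sin ?t)\<^sup>2 * cos ?t / 2"
      using dd0_pos[of ?t] by (simp add: field_simps power2_eq_square)
    also have "\<dots> = cos ?t * (1 - (sin ?t)\<^sup>2)" by (simp add: dd0_sq algebra_simps)
    also have "\<dots> = cos ?t * (cos ?t)\<^sup>2" by (simp add: cos_squared_eq)
    also have "\<dots> = (uu x)^3" by (simp add: uu_def power3_eq_cube power2_eq_square)
    finally show ?thesis .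
  qed
  ultimately show ?thesis by simp
qed

lemma ww_sq: "(ww x)\<^sup>2 = (1 - (uu x)^4) / 2"
proof -
  have c: "(uu x)^4 = (1 - (sin (am x))\<^sup>2)\<^sup>2"
  proof -
    have "(uu x)^4 = ((cos (am x))\<^sup>2)\<^sup>2" by (simp add: uu_def power4_eq_xxxx power2_eq_square)
    then show ?thesis by (simp add: cos_squared_eq)
  qed
  have alg: "\<And>a::real. a * (1 - 1/2 * a) = (1 - (1 - a)\<^sup>2) / 2"
    by (simp add: power2_eq_square field_simps)
  have "(ww x)\<^sup>2 = (sin (am x))\<^sup>2 * (1 - 1/2 * (sin (am x))\<^sup>2)"
    by (simp add: ww_def power_mult_distrib dd0_sq)
  also have "\<dots> = (1 - (uu x)^4) / 2"
    unfolding c by (rule alg)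
  finally show ?thesis .
qed

lemma uu_cont: "isCont uu x" using uu_deriv DERIV_isCont by blast
lemma ww_cont: "isCont ww x" using ww_deriv DERIV_isCont by blast

lemma am_strict_mono: "strict_mono am"
  unfolding strict_mono_def
  by (metis F_am ellF_strict_mono strict_mono_less)

lemma am_K: "am KK = pi/2" by (simp add: ellK_def am_F)
lemma am_mK: "am (-KK) = -pi/2"
  by (metis am_F ellF_odd ellK_def minus_divide_left)

lemma KK_pos: "KK > 0"
  using ellF_ge[of "pi/2"] pi_gt_zero unfolding ellK_def by linarith

lemma uu_pos: "\<bar>x\<bar> < KK \<Longrightarrow> uu x > 0"
proof -
  assume "\<bar>x\<bar> < KK"
  then have "am (-KK) < am x" "am x < am KK"
    using am_strict_mono by (auto simp: strict_mono_less)
  then show "uu x > 0" unfolding uu_def using am_K am_mK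
    by (intro cos_gt_zero_pi) auto
qed

lemma uu_zero: "\<bar>x\<bar> = KK \<Longrightarrow> uu x = 0"
proof -
  assume "\<bar>x\<bar> = KK"
  then have "x = KK \<or> x = -KK" by auto
  then show ?thesis by (auto simp add: uu_def am_K am_mK)
qed

lemma mvt_aux:
  fixes f f' :: "real \<Rightarrow> real"
  assumes "a < b" "continuous_on {a..b} f"
    "\<And>y. a < y \<Longrightarrow> y < b \<Longrightarrow> (f has_real_derivative f' y) (at y)"
  shows "\<exists>z. a < z \<and> z < b \<and> f b - f a = (b - a) * f' z"
proof -
  obtain l z where z: "a < z" "z < b" "DERIV f z :> l" "f b - f a = (b - a) * l"
    using MVT[OF assms(1,2)] assms(3) real_differentiable_def by blast
  then have "l = f' z" using assms(3) DERIV_unique by blast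
  then show ?thesis using z by blast
qed

lemma deriv_from_lim:
  fixes f f' :: "real \<Rightarrow> real"
  assumes r: "r > 0" and cont: "isCont f a"
   and der: "\<And>y. y \<noteq> a \<Longrightarrow> \<bar>y - a\<bar> < r \<Longrightarrow> (f has_real_derivative f' y) (at y)"
   and lim: "(f' \<longlongrightarrow> L) (at a)"
  shows "(f has_real_derivative L) (at a)"
  unfolding DERIV_def
proof (rule LIM_I)
  fix e :: real assume "0 < e"
  then obtain s where s: "s > 0" "\<And>y. y \<noteq> a \<and> norm (y - a) < s \<Longrightarrow> norm (f' y - L) < e"
    using lim unfolding LIM_eq by blast
  have contall: "\<And>y. \<bar>y - a\<bar> < r \<Longrightarrow> isCont f y"
    using cont der DERIV_isCont by (metis)
  show "\<exists>s>0. \<forall>h. h \<noteq> 0 \<and> norm (h - 0) < s \<longrightarrow> norm ((f (a + h) - f a) / h - L) < e"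
  proof (intro exI[of _ "min s r"] conjI allI impI)
    show "min s r > 0" using s r by simp
    fix h :: real assume h: "h \<noteq> 0 \<and> norm (h - 0) < min s r"
    show "norm ((f (a + h) - f a) / h - L) < e"
    proof (cases "h > 0")
      case True
      have "continuous_on {a..a+h} f"
        using h contall by (intro continuous_at_imp_continuous_on) auto
      then obtain z where z: "a < z" "z < a + h" "f (a+h) - f a = (a + h - a) * f' z"
        using mvt_aux[of a "a+h" f f'] True der h by auto
      then have "(f (a + h) - f a) / h = f' z" using True by simp
      moreover have "norm (f' z - L) < e" using s(2)[of z] z h by auto
      ultimately show ?thesis by simp
    next
      case False
      then have hn: "h < 0" using h by auto
      have "continuous_on {a+h..a} f"
        using h contall by (intro continuous_at_imp_continuous_on) auto
      then obtain z where z: "a + h < z" "z < a" "f a - f (a+h) = (a - (a + h)) * f' z"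
        using mvt_aux[of "a+h" a f f'] hn der h by auto
      then have "(f (a + h) - f a) / h = f' z" using hn by (simp add: field_simps)
      moreover have "norm (f' z - L) < e" using s(2)[of z] z h by auto
      ultimately show ?thesis by simp
    qed
  qed
qed

lemma alg_d1:
  fixes n u w P :: real
  assumes "w*w = (1-u^4)/2"
  shows "-n*(u^3*(P*u) + w*((n-1)*P*(-w))) = n*(n-1)/2*P - n*(n+1)/2*(P*u^4)"
proof -
  have "-n*(u^3*(P*u) + w*((n-1)*P*(-w))) = -n*P*u^4 + n*(n-1)*P*(w*w)"
    by (simp add: algebra_simps power_numeral_reduce)
  also have "\<dots> = n*(n-1)/2*P - n*(n+1)/2*(P*u^4)"
    unfolding assms by (simp add: field_simps)
  finally show ?thesis .
qed

lemma alg_ode: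
  fixes n u w V :: real
  assumes "w*w = (1-u^4)/2" "n \<noteq> 0"
  shows "n * (- w * (n*(n-1)*(n-2)/2 * V - n*(n+1)*(n+2)/2 * (V*u^4))) * (V*u^3)^2
    - 3 * n * (n*(n-1)/2 * (V*u) - n*(n+1)/2 * (V*u^5)) * (- n * (w * (V*u^2))) * (V*u^3)
    + 2 * (n - 1/n) * (- n * (w * (V*u^2)))^3 = 0"
proof -
  have e: "n - 1/n = (n*n - 1)/n" using assms(2) by (simp add: field_simps)
  have "n * (- w * (n*(n-1)*(n-2)/2 * V - n*(n+1)*(n+2)/2 * (V*u^4))) * (V*u^3)^2
    - 3 * n * (n*(n-1)/2 * (V*u) - n*(n+1)/2 * (V*u^5)) * (- n * (w * (V*u^2))) * (V*u^3)
    + 2 * (n - 1/n) * (- n * (w * (V*u^2)))^3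
    = w * V^3 * u^6 * (- n*(n*(n-1)*(n-2)/2 - n*(n+1)*(n+2)/2*u^4) + 3*n^2*(n*(n-1)/2 - n*(n+1)/2*u^4)
       - 2*n^2*(n*n-1)*(w*w))"
    unfolding e using assms(2) by (simp add: field_simps power_numeral_reduce)
  also have "(- n*(n*(n-1)*(n-2)/2 - n*(n+1)*(n+2)/2*u^4) + 3*n^2*(n*(n-1)/2 - n*(n+1)/2*u^4)
       - 2*n^2*(n*n-1)*(w*w)) = 0"
    unfolding assms(1) by (simp add: field_simps power_numeral_reduce)
  finally show ?thesis by simp
qed

lemma ww_sq': "ww x * ww x = (1 - (uu x)^4) / 2"
  using ww_sq[of x] by (simp add: power2_eq_square)

definition H0 :: "real \<Rightarrow> real \<Rightarrow> real" where "H0 n x = uu x powr n"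
definition H1 :: "real \<Rightarrow> real \<Rightarrow> real" where "H1 n x = - n * (ww x * uu x powr (n-1))"
definition H2 :: "real \<Rightarrow> real \<Rightarrow> real" where
  "H2 n x = n*(n-1)/2 * uu x powr (n-2) - n*(n+1)/2 * uu x powr (n+2)"
definition H3 :: "real \<Rightarrow> real \<Rightarrow> real" where
  "H3 n x = - ww x * (n*(n-1)*(n-2)/2 * uu x powr (n-3) - n*(n+1)*(n+2)/2 * uu x powr (n+1))"

lemma uu_powr_deriv:
  assumes "uu x > 0"
  shows "((\<lambda>x. uu x powr r) has_real_derivative r * uu x powr (r-1) * (- ww x)) (at x)"
  using DERIV_chain2[OF has_real_derivative_powr[OF assms, of r] uu_deriv] by simp

lemma powr_shift: "0 < (u::real) \<Longrightarrow> u powr (r + real k) = u powr r * u ^ k"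
  by (simp add: powr_add powr_realpow)

lemma H0_deriv: "uu x > 0 \<Longrightarrow> (H0 n has_real_derivative H1 n x) (at x)"
  unfolding H0_def[abs_def] H1_def
  by (rule DERIV_cong[OF uu_powr_deriv]) (auto simp: algebra_simps)

lemma H1_deriv:
  assumes "uu x > 0"
  shows "(H1 n has_real_derivative H2 n x) (at x)"
proof -
  have "((\<lambda>x. - n * (ww x * uu x powr (n-1))) has_real_derivative
      - n * (ww x * ((n-1) * uu x powr (n-1-1) * (- ww x)) + (uu x)^3 * uu x powr (n-1))) (at x)"
    by (intro DERIV_cmult DERIV_mult'[OF ww_deriv uu_powr_deriv[OF assms]])
  moreover have "- n * (ww x * ((n-1) * uu x powr (n-1-1) * (- ww x)) + (uu x)^3 * uu x powr (n-1))
      = H2 n x"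
  proof -
    let ?P = "uu x powr (n-2)"
    have a: "uu x powr (n-1-1) = ?P" by (simp add: algebra_simps)
    have b: "uu x powr (n-1) = ?P * uu x"
      using powr_shift[OF assms, of "n-2" 1] by (simp add: algebra_simps)
    have c: "uu x powr (n+2) = ?P * uu x ^ 4"
      using powr_shift[OF assms, of "n-2" 4] by (simp add: algebra_simps)
    show ?thesis
      unfolding H2_def a b c using alg_d1[where n=n and u="uu x" and w="ww x" and P="?P", OF ww_sq']
      by (simp add: algebra_simps)
  qed
  ultimately show ?thesis unfolding H1_def[abs_def] by simp
qed

lemma H2_deriv:
  assumes "uu x > 0"
  shows "(H2 n has_real_derivative H3 n x) (at x)"
proof -
  have "((\<lambda>x. n*(n-1)/2 * uu x powr (n-2) - n*(n+1)/2 * uu x powr (n+2)) has_real_derivative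
      n*(n-1)/2 * ((n-2) * uu x powr (n-2-1) * (- ww x)) - n*(n+1)/2 * ((n+2) * uu x powr (n+2-1) * (- ww x))) (at x)"
    by (intro DERIV_diff DERIV_cmult uu_powr_deriv[OF assms])
  moreover have "n*(n-1)/2 * ((n-2) * uu x powr (n-2-1) * (- ww x)) - n*(n+1)/2 * ((n+2) * uu x powr (n+2-1) * (- ww x))
      = H3 n x"
  proof -
    have a: "n-2-1 = n-3" "n+2-1 = n+1" by simp_all
    show ?thesis unfolding H3_def a by (simp add: field_simps)
  qed
  ultimately show ?thesis unfolding H2_def[abs_def] by simp
qed

lemma H_ode:
  assumes "uu x > 0" "n \<noteq> 0"
  shows "n * H3 n x * (H0 n x)^2 - 3 * n * H2 n x * H1 n x * H0 n x + 2 * (n - 1/n) * (H1 n x)^3 = 0"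
proof -
  let ?V = "uu x powr (n-3)"
  have s: "\<And>k. uu x powr (n - 3 + real k) = ?V * uu x ^ k" by (rule powr_shift[OF assms(1)])
  have e0: "uu x powr n = ?V * uu x ^ 3" using s[of 3] by simp
  have e1: "uu x powr (n-1) = ?V * uu x ^ 2" using s[of 2] by (simp add: algebra_simps)
  have e2: "uu x powr (n-2) = ?V * uu x" using s[of 1] by (simp add: algebra_simps)
  have e3: "uu x powr (n+1) = ?V * uu x ^ 4" using s[of 4] by (simp add: algebra_simps)
  have e4: "uu x powr (n+2) = ?V * uu x ^ 5" using s[of 5] by (simp add: algebra_simps)
  show ?thesis
    unfolding H0_def H1_def H2_def H3_def e0 e1 e2 e3 e4
    using alg_ode[where n=n and u="uu x" and w="ww x" and V="?V", OF ww_sq' assms(2)] by simp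
qed


definition A0 :: "real \<Rightarrow> real \<Rightarrow> real" where "A0 n x = \<bar>uu x\<bar> powr n"
definition A1 :: "real \<Rightarrow> real \<Rightarrow> real" where "A1 n x = - n * (ww x * \<bar>uu x\<bar> powr (n-1))"
definition A2 :: "real \<Rightarrow> real \<Rightarrow> real" where
  "A2 n x = n*(n-1)/2 * \<bar>uu x\<bar> powr (n-2) - n*(n+1)/2 * \<bar>uu x\<bar> powr (n+2)"
definition A3 :: "real \<Rightarrow> real \<Rightarrow> real" where
  "A3 n x = - ww x * (n*(n-1)*(n-2)/2 * \<bar>uu x\<bar> powr (n-3) - n*(n+1)*(n+2)/2 * \<bar>uu x\<bar> powr (n+1))"

lemma AH:
  assumes "uu x > 0"
  shows "A0 n x = H0 n x" "A1 n x = H1 n x" "A2 n x = H2 n x" "A3 n x = H3 n x"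
  using assms by (simp_all add: A0_def A1_def A2_def A3_def H0_def H1_def H2_def H3_def)

lemma abs_uu_powr_cont: "r > 0 \<Longrightarrow> isCont (\<lambda>x. \<bar>uu x\<bar> powr r) x"
  unfolding isCont_def
  by (rule tendsto_powr'[of "\<lambda>x. \<bar>uu x\<bar>" "\<bar>uu x\<bar>" "at x" "\<lambda>_. r" r])
     (auto intro!: tendsto_rabs uu_cont[unfolded isCont_def])

lemma A_cont:
  assumes "n > 3"
  shows "isCont (A0 n) x" "isCont (A1 n) x" "isCont (A2 n) x" "isCont (A3 n) x"
proof -
  have c: "\<And>r. r > 0 \<Longrightarrow> isCont (\<lambda>x. \<bar>uu x\<bar> powr r) x" by (rule abs_uu_powr_cont)
  have p: "n > 0" "n - 1 > 0" "n - 2 > 0" "n - 3 > 0" "n + 1 > 0" "n + 2 > 0" using assms by auto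
  show "isCont (A0 n) x" unfolding A0_def[abs_def] using c p by simp
  show "isCont (A1 n) x" unfolding A1_def[abs_def]
    by (intro isCont_minus isCont_mult isCont_diff continuous_const ww_cont c[OF p(2)])
  show "isCont (A2 n) x" unfolding A2_def[abs_def]
    by (intro isCont_minus isCont_mult isCont_diff continuous_const ww_cont c[OF p(3)] c[OF p(6)])
  show "isCont (A3 n) x" unfolding A3_def[abs_def]
    by (intro isCont_minus isCont_mult isCont_diff continuous_const ww_cont c[OF p(4)] c[OF p(5)])
qed

lemma A_zero:
  assumes "n > 3" "uu x = 0"
  shows "A0 n x = 0" "A1 n x = 0" "A2 n x = 0" "A3 n x = 0"
  using assms by (simp_all add: A0_def A1_def A2_def A3_def)

definition cutK :: "(real \<Rightarrow> real) \<Rightarrow> real \<Rightarrow> real" where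
  "cutK H x = (if \<bar>x\<bar> < KK then H x else 0)"

lemma open_out: "open {y::real. KK < \<bar>y\<bar>}"
  by (intro open_Collect_less continuous_intros)

lemma cut_cont:
  assumes cA: "\<And>x. isCont A x" and zA: "\<And>x. \<bar>x\<bar> = KK \<Longrightarrow> A x = 0"
  shows "isCont (cutK A) x"
proof -
  consider "\<bar>x\<bar> < KK" | "\<bar>x\<bar> > KK" | "\<bar>x\<bar> = KK" by linarith
  then show ?thesis
  proof cases
    case 1
    have "eventually (\<lambda>y. y \<in> {-KK<..<KK}) (nhds x)"
      using 1 by (intro eventually_nhds_in_open) auto
    then have "eventually (\<lambda>y. cutK A y = A y) (nhds x)"
      by eventually_elim (auto simp: cutK_def)
    then show ?thesis using isCont_cong cA by blast
  next
    case 2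
    have "eventually (\<lambda>y. y \<in> {y. KK < \<bar>y\<bar>}) (nhds x)"
      using 2 by (intro eventually_nhds_in_open open_out) auto
    then have "eventually (\<lambda>y. cutK A y = 0) (nhds x)"
      by eventually_elim (auto simp: cutK_def)
    have "isCont (\<lambda>_. 0::real) x" by simp
    then show ?thesis using isCont_cong[OF \<open>eventually (\<lambda>y. cutK A y = 0) (nhds x)\<close>] by simp
  next
    case 3
    have "(cutK A \<longlongrightarrow> 0) (at x)"
    proof (rule Lim_null_comparison)
      show "eventually (\<lambda>y. norm (cutK A y) \<le> \<bar>A y\<bar>) (at x)"
        by (intro always_eventually) (auto simp: cutK_def)
      have "((\<lambda>y. \<bar>A y\<bar>) \<longlongrightarrow> \<bar>A x\<bar>) (at x)"
        using cA[of x] by (intro tendsto_rabs) (simp add: isCont_def)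
      then show "((\<lambda>y. \<bar>A y\<bar>) \<longlongrightarrow> 0) (at x)" using zA[OF 3] by simp
    qed
    moreover have "cutK A x = 0" using 3 by (simp add: cutK_def)
    ultimately show ?thesis by (simp add: isCont_def)
  qed
qed

lemma cut_deriv_nb:
  assumes dA: "\<And>x. \<bar>x\<bar> < KK \<Longrightarrow> (A has_real_derivative A' x) (at x)"
    and "\<bar>x\<bar> \<noteq> KK"
  shows "(cutK A has_real_derivative cutK A' x) (at x)"
proof (cases "\<bar>x\<bar> < KK")
  case True
  show ?thesis
  proof (rule has_field_derivative_transform_within_open[where S="{-KK<..<KK}"])
    show "(A has_real_derivative cutK A' x) (at x)" using dA[OF True] True by (simp add: cutK_def)
    show "open {-KK<..<KK}" by simp
    show "x \<in> {-KK<..<KK}" using True by auto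
    fix y assume "y \<in> {-KK<..<KK}" then show "A y = cutK A y" by (auto simp: cutK_def)
  qed
next
  case False
  then have x: "KK < \<bar>x\<bar>" using assms(2) by linarith
  show ?thesis
  proof (rule has_field_derivative_transform_within_open[where S="{y. KK < \<bar>y\<bar>}"])
    show "((\<lambda>_. 0) has_real_derivative cutK A' x) (at x)" using x by (simp add: cutK_def)
    show "open {y. KK < \<bar>y\<bar>}" by (rule open_out)
    show "x \<in> {y. KK < \<bar>y\<bar>}" using x by auto
    fix y assume "y \<in> {y. KK < \<bar>y\<bar>}" then show "0 = cutK A y" by (auto simp: cutK_def)
  qed
qed

lemma cut_deriv:
  assumes dA: "\<And>x. \<bar>x\<bar> < KK \<Longrightarrow> (A has_real_derivative A' x) (at x)"
    and cA: "\<And>x. isCont (cutK A) x" and cA': "\<And>x. isCont (cutK A') x"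
  shows "(cutK A has_real_derivative cutK A' x) (at x)"
proof (cases "\<bar>x\<bar> = KK")
  case False
  then show ?thesis using cut_deriv_nb[OF dA] by blast
next
  case True
  have z: "cutK A' x = 0" using True by (simp add: cutK_def)
  show ?thesis
  proof (rule deriv_from_lim[of KK])
    show "KK > 0" by (rule KK_pos)
    show "isCont (cutK A) x" by (rule cA)
    fix y assume "y \<noteq> x" "\<bar>y - x\<bar> < KK"
    then have "\<bar>y\<bar> \<noteq> KK" using True KK_pos by auto
    then show "(cutK A has_real_derivative cutK A' y) (at y)" using cut_deriv_nb[OF dA] by blast
  next
    show "(cutK A' \<longlongrightarrow> cutK A' x) (at x)" using cA'[of x] by (simp add: isCont_def)
  qed
qed

lemma A_deriv:
  assumes "\<bar>x\<bar> < KK"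
  shows "(A0 n has_real_derivative A1 n x) (at x)"
    "(A1 n has_real_derivative A2 n x) (at x)"
    "(A2 n has_real_derivative A3 n x) (at x)"
proof -
  have pos: "\<And>y. y \<in> {-KK<..<KK} \<Longrightarrow> uu y > 0" using uu_pos by auto
  have x: "x \<in> {-KK<..<KK}" and ux: "uu x > 0" using assms uu_pos by auto
  show "(A0 n has_real_derivative A1 n x) (at x)"
  proof (rule has_field_derivative_transform_within_open[where f="H0 n" and S="{-KK<..<KK}", OF _ _ x])
    show "(H0 n has_real_derivative A1 n x) (at x)" using H0_deriv[OF ux] by (simp add: AH[OF ux])
    fix y assume "y \<in> {-KK<..<KK}" then show "H0 n y = A0 n y" using AH(1)[OF pos] by simp
  qed simp
  show "(A1 n has_real_derivative A2 n x) (at x)"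
  proof (rule has_field_derivative_transform_within_open[where f="H1 n" and S="{-KK<..<KK}", OF _ _ x])
    show "(H1 n has_real_derivative A2 n x) (at x)" using H1_deriv[OF ux] by (simp add: AH[OF ux])
    fix y assume "y \<in> {-KK<..<KK}" then show "H1 n y = A1 n y" using AH(2)[OF pos] by simp
  qed simp
  show "(A2 n has_real_derivative A3 n x) (at x)"
  proof (rule has_field_derivative_transform_within_open[where f="H2 n" and S="{-KK<..<KK}", OF _ _ x])
    show "(H2 n has_real_derivative A3 n x) (at x)" using H2_deriv[OF ux] by (simp add: AH[OF ux])
    fix y assume "y \<in> {-KK<..<KK}" then show "H2 n y = A2 n y" using AH(3)[OF pos] by simp
  qed simp
qed

lemma part1:
  assumes n3: "n > 3"
  shows "(cutK (A0 n) has_real_derivative cutK (A1 n) x) (at x)"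
    "(cutK (A1 n) has_real_derivative cutK (A2 n) x) (at x)"
    "(cutK (A2 n) has_real_derivative cutK (A3 n) x) (at x)"
    "isCont (cutK (A3 n)) x"
    "n * cutK (A3 n) x * (cutK (A0 n) x)^2 - 3 * n * cutK (A2 n) x * cutK (A1 n) x * cutK (A0 n) x
       + 2 * (n - 1 / n) * (cutK (A1 n) x)^3 = 0"
proof -
  have z: "\<And>x. \<bar>x\<bar> = KK \<Longrightarrow> uu x = 0" by (rule uu_zero)
  have c: "\<And>x. isCont (cutK (A0 n)) x" "\<And>x. isCont (cutK (A1 n)) x"
     "\<And>x. isCont (cutK (A2 n)) x" "\<And>x. isCont (cutK (A3 n)) x"
    by (rule cut_cont, rule A_cont[OF n3], rule A_zero[OF n3 z], assumption)+
  show "(cutK (A0 n) has_real_derivative cutK (A1 n) x) (at x)"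
    by (rule cut_deriv[OF A_deriv(1) c(1) c(2)])
  show "(cutK (A1 n) has_real_derivative cutK (A2 n) x) (at x)"
    by (rule cut_deriv[OF A_deriv(2) c(2) c(3)])
  show "(cutK (A2 n) has_real_derivative cutK (A3 n) x) (at x)"
    by (rule cut_deriv[OF A_deriv(3) c(3) c(4)])
  show "isCont (cutK (A3 n)) x" by (rule c(4))
  show "n * cutK (A3 n) x * (cutK (A0 n) x)^2 - 3 * n * cutK (A2 n) x * cutK (A1 n) x * cutK (A0 n) x
       + 2 * (n - 1 / n) * (cutK (A1 n) x)^3 = 0"
  proof (cases "\<bar>x\<bar> < KK")
    case True
    then have ux: "uu x > 0" by (rule uu_pos)
    have "n \<noteq> 0" using n3 by simp
    have e: "cutK (A0 n) x = H0 n x" "cutK (A1 n) x = H1 n x" "cutK (A2 n) x = H2 n x" "cutK (A3 n) x = H3 n x"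
      using True AH[OF ux] by (simp_all add: cutK_def)
    show ?thesis unfolding e by (rule H_ode[OF ux \<open>n \<noteq> 0\<close>])
  next
    case False
    then have e: "cutK (A0 n) x = 0" "cutK (A1 n) x = 0" "cutK (A2 n) x = 0" "cutK (A3 n) x = 0"
      by (simp_all add: cutK_def)
    show ?thesis unfolding e by simp
  qed
qed


lemma half_line_integral:
  fixes h :: "real \<Rightarrow> real"
  assumes ch: "\<And>t. isCont h t" and z: "\<And>t. t \<le> L \<Longrightarrow> h t = 0" and xL: "L \<le> x"
  shows "(h has_integral integral {L..x} h) {..x}"
proof -
  have ci: "continuous_on {L..x} h" using ch by (simp add: continuous_at_imp_continuous_on)
  have "(h has_integral integral {L..x} h) {L..x}"
    using integrable_continuous_interval[OF ci] by (simp add: has_integral_integral)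
  then have "((\<lambda>t. if t \<in> {L..x} then h t else 0) has_integral integral {L..x} h) {L..x}"
    by (rule has_integral_eq[rotated]) simp
  then have "((\<lambda>t. if t \<in> {L..x} then h t else 0) has_integral integral {L..x} h) {..x}"
    by (rule has_integral_on_superset) auto
  then show ?thesis
    by (rule has_integral_eq[rotated]) (use z in auto)
qed

lemma half_line_props:
  fixes h :: "real \<Rightarrow> real"
  assumes ch: "\<And>t. isCont h t" and z: "\<And>t. t \<le> L \<Longrightarrow> h t = 0"
  shows "h integrable_on {..x}" "((\<lambda>x. integral {..x} h) has_real_derivative h x) (at x)"
proof -
  define L' where "L' = min L (x - 1)"
  have z': "\<And>t. t \<le> L' \<Longrightarrow> h t = 0" using z L'_def by auto
  have hi: "\<And>y. L' \<le> y \<Longrightarrow> (h has_integral integral {L'..y} h) {..y}"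
    by (rule half_line_integral[OF ch z'])
  have L'x: "L' < x" using L'_def by auto
  show "h integrable_on {..x}" using hi[of x] L'x by auto
  have ci: "continuous_on {L'..x+1} h" using ch by (simp add: continuous_at_imp_continuous_on)
  have "((\<lambda>y. integral {L'..y} h) has_real_derivative h x) (at x within {L'..x+1})"
    using L'x by (intro integral_has_real_derivative ci) auto
  moreover have "x \<in> interior {L'..x+1}" using L'x by auto
  ultimately have d: "((\<lambda>y. integral {L'..y} h) has_real_derivative h x) (at x)"
    by (metis at_within_interior)
  show "((\<lambda>x. integral {..x} h) has_real_derivative h x) (at x)"
  proof (rule has_field_derivative_transform_within_open[OF d, where S="{L'<..}"])
    show "open {L'<..}" by simp
    show "x \<in> {L'<..}" using L'x by simp
    fix y assume "y \<in> {L'<..}"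
    then show "integral {L'..y} h = integral {..y} h"
      using hi[of y] by (simp add: integral_unique)
  qed
qed

lemma g_zero_far:
  fixes \<alpha> \<beta> t :: real
  assumes "\<alpha> \<noteq> 0" "t \<le> -(KK + \<bar>\<beta>\<bar>)/\<bar>\<alpha>\<bar> - 1"
  shows "\<bar>\<alpha> * t + \<beta>\<bar> > KK"
proof -
  have a: "\<bar>\<alpha>\<bar> > 0" using assms by simp
  have "\<bar>t\<bar> \<ge> (KK + \<bar>\<beta>\<bar>)/\<bar>\<alpha>\<bar> + 1" using assms(2) by linarith
  then have "\<bar>\<alpha>\<bar> * \<bar>t\<bar> \<ge> \<bar>\<alpha>\<bar> * ((KK + \<bar>\<beta>\<bar>)/\<bar>\<alpha>\<bar> + 1)"
    using a by (intro mult_left_mono) auto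
  also have "\<bar>\<alpha>\<bar> * ((KK + \<bar>\<beta>\<bar>)/\<bar>\<alpha>\<bar> + 1) = KK + \<bar>\<beta>\<bar> + \<bar>\<alpha>\<bar>"
    using a by (simp add: field_simps)
  finally have "\<bar>\<alpha> * t\<bar> \<ge> KK + \<bar>\<beta>\<bar> + \<bar>\<alpha>\<bar>" by (simp add: abs_mult)
  then show ?thesis using a by linarith
qed

theorem mainTheorem2:
  fixes n :: real and g :: "real \<Rightarrow> real"
  assumes n3: "n > 3"
    and g_def: "\<And>x. g x = (if x \<in> {- ellK (1/2) .. ellK (1/2)} then (jacobi_cn (1/2) x) powr n else 0)"
  shows "(\<exists>g1 g2 g3.
            (\<forall>x. (g has_real_derivative g1 x) (at x)) \<and>
            (\<forall>x. (g1 has_real_derivative g2 x) (at x)) \<and>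
            (\<forall>x. (g2 has_real_derivative g3 x) (at x)) \<and>
            continuous_on UNIV g3 \<and>
            (\<forall>x. n * g3 x * (g x)^2 - 3 * n * g2 x * g1 x * g x + 2 * (n - 1 / n) * (g1 x)^3 = 0))
      \<and> (\<forall>\<alpha> \<beta> \<gamma> \<delta> :: real. \<alpha> \<noteq> 0 \<longrightarrow>
            (\<forall>x. (\<lambda>t. g (\<alpha> * t + \<beta>)) integrable_on {..x}) \<and>
            (\<exists>Y1 Y2 Y3 Y4.
               let Y = (\<lambda>x. \<gamma> * integral {..x} (\<lambda>t. g (\<alpha> * t + \<beta>)) + \<delta>) in
               (\<forall>x. (Y has_real_derivative Y1 x) (at x)) \<and>
               (\<forall>x. (Y1 has_real_derivative Y2 x) (at x)) \<and>
               (\<forall>x. (Y2 has_real_derivative Y3 x) (at x)) \<and>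
               (\<forall>x. (Y3 has_real_derivative Y4 x) (at x)) \<and>
               continuous_on UNIV Y4 \<and>
               (\<forall>x. Y4 x * (Y1 x)^2 - 3 * Y3 x * Y2 x * Y1 x + 2 * (1 - 1 / n^2) * (Y2 x)^3 = 0)))"
proof -
  define g1 where "g1 = cutK (A1 n)"
  define g2 where "g2 = cutK (A2 n)"
  define g3 where "g3 = cutK (A3 n)"
  have gg: "g = cutK (A0 n)"
  proof
    fix x
    show "g x = cutK (A0 n) x"
    proof (cases "\<bar>x\<bar> < KK")
      case True
      then show ?thesis using uu_pos[OF True]
        by (simp add: g_def cutK_def A0_def uu_def jacobi_cn_def abs_le_iff abs_less_iff)
    next
      case False
      show ?thesis
      proof (cases "\<bar>x\<bar> = KK")
        case True
        then have "uu x = 0" by (rule uu_zero)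
        then have "cos (am x) = 0" by (simp add: uu_def)
        moreover have "x \<in> {-KK..KK}" using True by auto
        ultimately show ?thesis using True n3 by (simp add: g_def cutK_def jacobi_cn_def)
      next
        case False
        then have "x \<notin> {-KK..KK}" using \<open>\<not> \<bar>x\<bar> < KK\<close> by auto
        then show ?thesis using \<open>\<not> \<bar>x\<bar> < KK\<close> by (auto simp add: g_def cutK_def)
      qed
    qed
  qed
  have d0: "\<And>x. (g has_real_derivative g1 x) (at x)"
    unfolding gg g1_def by (rule part1(1)[OF n3])
  have d1: "\<And>x. (g1 has_real_derivative g2 x) (at x)"
    unfolding g2_def g1_def by (rule part1(2)[OF n3])
  have d2: "\<And>x. (g2 has_real_derivative g3 x) (at x)"
    unfolding g2_def g3_def by (rule part1(3)[OF n3])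
  have c3: "\<And>x. isCont g3 x" unfolding g3_def by (rule part1(4)[OF n3])
  have ode: "\<And>x. n * g3 x * (g x)^2 - 3 * n * g2 x * g1 x * g x + 2 * (n - 1 / n) * (g1 x)^3 = 0"
    unfolding gg g1_def g2_def g3_def by (rule part1(5)[OF n3])
  have c0: "\<And>x. isCont g x" using d0 DERIV_isCont by blast
  have P1: "\<exists>g1 g2 g3.
            (\<forall>x. (g has_real_derivative g1 x) (at x)) \<and>
            (\<forall>x. (g1 has_real_derivative g2 x) (at x)) \<and>
            (\<forall>x. (g2 has_real_derivative g3 x) (at x)) \<and>
            continuous_on UNIV g3 \<and>
            (\<forall>x. n * g3 x * (g x)^2 - 3 * n * g2 x * g1 x * g x + 2 * (n - 1 / n) * (g1 x)^3 = 0)"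
  proof -
    have cc: "continuous_on UNIV g3" by (rule continuous_at_imp_continuous_on) (use c3 in blast)
    show ?thesis by (rule exI[of _ g1], rule exI[of _ g2], rule exI[of _ g3]) (intro conjI allI d0 d1 d2 cc ode)
  qed
  have P2: "(\<forall>x. (\<lambda>t. g (\<alpha> * t + \<beta>)) integrable_on {..x}) \<and>
            (\<exists>Y1 Y2 Y3 Y4.
               let Y = (\<lambda>x. \<gamma> * integral {..x} (\<lambda>t. g (\<alpha> * t + \<beta>)) + \<delta>) in
               (\<forall>x. (Y has_real_derivative Y1 x) (at x)) \<and>
               (\<forall>x. (Y1 has_real_derivative Y2 x) (at x)) \<and>
               (\<forall>x. (Y2 has_real_derivative Y3 x) (at x)) \<and>
               (\<forall>x. (Y3 has_real_derivative Y4 x) (at x)) \<and>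
               continuous_on UNIV Y4 \<and>
               (\<forall>x. Y4 x * (Y1 x)^2 - 3 * Y3 x * Y2 x * Y1 x + 2 * (1 - 1 / n^2) * (Y2 x)^3 = 0))"
    if a0: "\<alpha> \<noteq> 0" for \<alpha> \<beta> \<gamma> \<delta> :: real
  proof -
    let ?h = "\<lambda>t. g (\<alpha> * t + \<beta>)"
    define L where "L = -(KK + \<bar>\<beta>\<bar>)/\<bar>\<alpha>\<bar> - 1"
    have cl: "\<And>t. isCont (\<lambda>t. \<alpha> * t + \<beta>) t" by (intro continuous_intros)
    have ch: "\<And>t. isCont ?h t"
    proof -
      fix t show "isCont ?h t" using isCont_o2[OF cl c0] by simp
    qed
    have hz: "\<And>t. t \<le> L \<Longrightarrow> ?h t = 0"
    proof -
      fix t assume "t \<le> L"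
      then have "\<bar>\<alpha> * t + \<beta>\<bar> > KK" using g_zero_far[OF a0] L_def by blast
      then show "?h t = 0" by (simp add: gg cutK_def)
    qed
    have lin: "((\<lambda>x. \<alpha> * x + \<beta>) has_real_derivative \<alpha>) (at x)" for x
      by (auto intro!: derivative_eq_intros)
    have ch_d: "\<And>f f'. (\<And>y. (f has_real_derivative f' y) (at y)) \<Longrightarrow>
        ((\<lambda>x. \<gamma> * (\<alpha> ^ k) * f (\<alpha> * x + \<beta>)) has_real_derivative \<gamma> * (\<alpha> ^ Suc k) * f' (\<alpha> * x + \<beta>)) (at x)"
      for x k
    proof -
      fix f f' :: "real \<Rightarrow> real" assume df: "\<And>y. (f has_real_derivative f' y) (at y)"
      have "((\<lambda>x. f (\<alpha> * x + \<beta>)) has_real_derivative f' (\<alpha> * x + \<beta>) * \<alpha>) (at x)"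
        by (rule DERIV_chain2[OF df lin])
      then have "((\<lambda>x. \<gamma> * (\<alpha> ^ k) * f (\<alpha> * x + \<beta>)) has_real_derivative \<gamma> * (\<alpha> ^ k) * (f' (\<alpha> * x + \<beta>) * \<alpha>)) (at x)"
        by (rule DERIV_cmult)
      then show "((\<lambda>x. \<gamma> * (\<alpha> ^ k) * f (\<alpha> * x + \<beta>)) has_real_derivative \<gamma> * (\<alpha> ^ Suc k) * f' (\<alpha> * x + \<beta>)) (at x)"
        by (simp add: algebra_simps)
    qed
    define Y1 where "Y1 = (\<lambda>x. \<gamma> * (\<alpha> ^ 0) * g (\<alpha> * x + \<beta>))"
    define Y2 where "Y2 = (\<lambda>x. \<gamma> * (\<alpha> ^ 1) * g1 (\<alpha> * x + \<beta>))"
    define Y3 where "Y3 = (\<lambda>x. \<gamma> * (\<alpha> ^ 2) * g2 (\<alpha> * x + \<beta>))"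
    define Y4 where "Y4 = (\<lambda>x. \<gamma> * (\<alpha> ^ 3) * g3 (\<alpha> * x + \<beta>))"
    have int: "\<forall>x. ?h integrable_on {..x}" using half_line_props(1)[OF ch hz] by blast
    have dY: "((\<lambda>x. \<gamma> * integral {..x} ?h + \<delta>) has_real_derivative Y1 x) (at x)" for x
    proof -
      have "((\<lambda>x. \<gamma> * integral {..x} ?h + \<delta>) has_real_derivative \<gamma> * ?h x + 0) (at x)"
        by (intro DERIV_add DERIV_cmult half_line_props(2)[OF ch hz] DERIV_const)
      then show ?thesis by (simp add: Y1_def)
    qed
    have dY1: "(Y1 has_real_derivative Y2 x) (at x)" for x
      unfolding Y1_def Y2_def using ch_d[of g g1 0 x] d0 by simp
    have dY2: "(Y2 has_real_derivative Y3 x) (at x)" for x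
      unfolding Y2_def Y3_def using ch_d[of g1 g2 1 x] d1 by (simp add: numeral_2_eq_2)
    have dY3: "(Y3 has_real_derivative Y4 x) (at x)" for x
      unfolding Y3_def Y4_def using ch_d[of g2 g3 2 x] d2 by (simp add: numeral_3_eq_3 numeral_2_eq_2)
    have cY4: "continuous_on UNIV Y4"
    proof (rule continuous_at_imp_continuous_on, rule ballI)
      fix t
      have "isCont (\<lambda>t. g3 (\<alpha> * t + \<beta>)) t" using isCont_o2[OF cl c3] by simp
      then show "isCont Y4 t" unfolding Y4_def by (intro isCont_mult continuous_const)
    qed
    have eq: "Y4 x * (Y1 x)^2 - 3 * Y3 x * Y2 x * Y1 x + 2 * (1 - 1 / n^2) * (Y2 x)^3 = 0" for x
    proof -
      let ?y = "\<alpha> * x + \<beta>"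
      have nz: "n \<noteq> 0" using n3 by simp
      have b: "g3 ?y * (g ?y)^2 - 3 * g2 ?y * g1 ?y * g ?y + 2 * (1 - 1 / n^2) * (g1 ?y)^3 = 0"
      proof -
        have "n * (g3 ?y * (g ?y)^2 - 3 * g2 ?y * g1 ?y * g ?y + 2 * (1 - 1 / n^2) * (g1 ?y)^3)
            = n * g3 ?y * (g ?y)^2 - 3 * n * g2 ?y * g1 ?y * g ?y + 2 * (n - 1 / n) * (g1 ?y)^3"
          using nz by (simp add: field_simps power2_eq_square)
        then show ?thesis using ode[of ?y] nz by simp
      qed
      have "Y4 x * (Y1 x)^2 - 3 * Y3 x * Y2 x * Y1 x + 2 * (1 - 1 / n^2) * (Y2 x)^3
          = (\<gamma>^3 * \<alpha>^3) * (g3 ?y * (g ?y)^2 - 3 * g2 ?y * g1 ?y * g ?y + 2 * (1 - 1 / n^2) * (g1 ?y)^3)"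
        unfolding Y1_def Y2_def Y3_def Y4_def by (simp add: algebra_simps power2_eq_square power3_eq_cube)
      then show ?thesis using b by simp
    qed
    show ?thesis
      unfolding Let_def
      apply (intro conjI)
       apply (rule int)
      apply (rule exI[of _ Y1], rule exI[of _ Y2], rule exI[of _ Y3], rule exI[of _ Y4])
      apply (intro conjI allI)
      by (rule int[rule_format] dY dY1 dY2 dY3 cY4 eq)+
  qed
  show ?thesis
  proof (rule conjI[OF P1], intro allI impI)
    fix \<alpha> \<beta> \<gamma> \<delta> :: real assume "\<alpha> \<noteq> 0"
    then show "(\<forall>x. (\<lambda>t. g (\<alpha> * t + \<beta>)) integrable_on {..x}) \<and>
            (\<exists>Y1 Y2 Y3 Y4.
               let Y = (\<lambda>x. \<gamma> * integral {..x} (\<lambda>t. g (\<alpha> * t + \<beta>)) + \<delta>) in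
               (\<forall>x. (Y has_real_derivative Y1 x) (at x)) \<and>
               (\<forall>x. (Y1 has_real_derivative Y2 x) (at x)) \<and>
               (\<forall>x. (Y2 has_real_derivative Y3 x) (at x)) \<and>
               (\<forall>x. (Y3 has_real_derivative Y4 x) (at x)) \<and>
               continuous_on UNIV Y4 \<and>
               (\<forall>x. Y4 x * (Y1 x)^2 - 3 * Y3 x * Y2 x * Y1 x + 2 * (1 - 1 / n^2) * (Y2 x)^3 = 0))"
      by (rule P2)
  qed
qed

end
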